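(* In the setting below, let $\alpha$ be a limit ordinal, let $\emptyset\neq x\subseteq M_\alpha$, let $I=\{\beta<\alpha: x\cap M_{\beta+1}\neq\emptyset\}$, and for $\beta\in I$ let $x_{\beta+1}=x\cap M_{\beta+1}$. Then $x\in M_{\alpha+1}$ if and only if $I\neq\emptyset$, $x=\bigcup_{\beta\in I}x_{\beta+1}$, and $x_{\beta+1}\in M_{\beta+2}$ for every $\beta\in I$.
   Context: Work in ZFA (ZF with a set $A$ of atoms, i.e. urelements that have no elements), extended by a primitive binary relation $\preccurlyeq$ on $A$, with Separation and Replacement holding for formulas mentioning $\preccurlyeq$. $A$ is an infinite set of atoms and $\preccurlyeq$ is a pre-ordering (reflexive, transitive) on $A$ with no minimal elements: for every $a\in A$ there is $b\in A$ with $b\preccurlyeq a$ and not $a\preccurlyeq b$. For $a\in A$, $pr(a)=\{b\in A:b\preccurlyeq a\}$; $LO(A,\preccurlyeq)$ is the set of nonempty $x\subseteq A$ with $pr(a)\subseteq x$ for all $a\in x$. For a set $X$ of sets, $LO(X,\subseteq)$ is the set of nonempty $x\subseteq X$ such that for every $y\in x$ and every $z\in X$ with $z\subseteq y$, $z\in x$. The magmatic hierarchy: $M_1=LO(A,\preccurlyeq)$; $M_{\alpha+1}=LO(M_\alpha,\subseteq)$ for $\alpha\geq1$; $M_\alpha=\bigcup_{1\leq\beta<\alpha}M_\beta$ for limit $\alpha$; $M=\bigcup_{\alpha\geq1}M_\alpha$. (Here $M_{0+1}=M_1$.) Limit ordinals are nonzero. *)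

theory Defs
  imports Main
begin

text \<open>Objects of the universe are elements of a type 'v.
  A :: 'v set is the set of atoms, elts u is the set of elements of u
  (atoms have no elements, non-atoms are determined by their elements).
  A set of objects S is "realised" by a non-atom u when elts u = S.\<close>

definition ozero :: "'o::wellorder" where
  "ozero = (LEAST x. True)"

definition osucc :: "'o::wellorder \<Rightarrow> 'o" where
  "osucc b = (LEAST c. b < c)"

definition is_limit :: "'o::wellorder \<Rightarrow> bool" where
  "is_limit a \<longleftrightarrow> a \<noteq> ozero \<and> (\<forall>b<a. osucc b < a)"

definition pr :: "('v \<Rightarrow> 'v \<Rightarrow> bool) \<Rightarrow> 'v set \<Rightarrow> 'v \<Rightarrow> 'v set" where
  "pr le A a = {b \<in> A. le b a}"

definition LO_pre :: "('v \<Rightarrow> 'v \<Rightarrow> bool) \<Rightarrow> 'v set \<Rightarrow> 'v set set" where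
  "LO_pre le A = {x. x \<noteq> {} \<and> x \<subseteq> A \<and> (\<forall>a\<in>x. pr le A a \<subseteq> x)}"

definition LO_sub :: "('v \<Rightarrow> 'v set) \<Rightarrow> 'v set \<Rightarrow> 'v set set" where
  "LO_sub elts X = {x. x \<noteq> {} \<and> x \<subseteq> X \<and> (\<forall>y\<in>x. \<forall>z\<in>X. elts z \<subseteq> elts y \<longrightarrow> z \<in> x)}"

definition objs :: "'v set \<Rightarrow> ('v \<Rightarrow> 'v set) \<Rightarrow> 'v set set \<Rightarrow> 'v set" where
  "objs A elts F = {u. u \<notin> A \<and> elts u \<in> F}"

text \<open>One step of the magmatic hierarchy recursion; index ozero is a dummy (M_0 is not used).\<close>
definition M_step :: "('v \<Rightarrow> 'v \<Rightarrow> bool) \<Rightarrow> 'v set \<Rightarrow> ('v \<Rightarrow> 'v set)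
    \<Rightarrow> ('o::wellorder \<Rightarrow> 'v set) \<Rightarrow> 'o \<Rightarrow> 'v set" where
  "M_step le A elts f g =
     (if g = ozero then {}
      else if g = osucc ozero then objs A elts (LO_pre le A)
      else if (\<exists>b<g. g = osucc b) then objs A elts (LO_sub elts (f (THE b. b < g \<and> g = osucc b)))
      else (\<Union>b\<in>{b. osucc ozero \<le> b \<and> b < g}. f b))"

definition Mag :: "('v \<Rightarrow> 'v \<Rightarrow> bool) \<Rightarrow> 'v set \<Rightarrow> ('v \<Rightarrow> 'v set) \<Rightarrow> 'o::wellorder \<Rightarrow> 'v set" where
  "Mag le A elts = wfrec {(x, y). x < y} (M_step le A elts)"

end

theory Submission
  imports Defs
begin


lemma osucc_gt: "(b::'o::wellorder) < c \<Longrightarrow> b < osucc b"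
  unfolding osucc_def by (rule LeastI)

lemma osucc_le: "(b::'o::wellorder) < c \<Longrightarrow> osucc b \<le> c"
  unfolding osucc_def by (rule Least_le)

lemma ozero_le: "ozero \<le> (b::'o::wellorder)"
  unfolding ozero_def by (rule Least_le) simp

lemma osucc_mono: "(b::'o::wellorder) \<le> b' \<Longrightarrow> b' < c \<Longrightarrow> osucc b \<le> osucc b'"
  by (metis order.strict_trans1 order.strict_trans2 osucc_gt osucc_le order.order_iff_strict)

lemma M_step_lim: "g \<noteq> ozero \<Longrightarrow> g \<noteq> osucc ozero \<Longrightarrow> \<not> (\<exists>b<g. g = osucc b) \<Longrightarrow>
  M_step le A elts f g = (\<Union>b\<in>{b. osucc ozero \<le> b \<and> b < g}. f b)"
  unfolding M_step_def by (simp only: if_False if_True)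

lemma M_step_suc: "g \<noteq> ozero \<Longrightarrow> g \<noteq> osucc ozero \<Longrightarrow> (\<exists>b<g. g = osucc b) \<Longrightarrow>
  M_step le A elts f g = objs A elts (LO_sub elts (f (THE b. b < g \<and> g = osucc b)))"
  unfolding M_step_def by (simp only: if_False if_True)

lemma Mag_unfold: "Mag le A elts (g::'o::wellorder) = M_step le A elts (Mag le A elts) g"
proof -
  have "Mag le A elts g = M_step le A elts (cut (Mag le A elts) {(x,y). x<y} g) g"
    unfolding Mag_def by (rule wfrec[OF wf])
  also have "\<dots> = M_step le A elts (Mag le A elts) g"
  proof (cases "\<exists>b<g. g = osucc b")
    case True
    then obtain b0 where b0: "b0 < g" "g = osucc b0" by blast
    have uniq: "(THE b. b < g \<and> g = osucc b) = b0"
    proof (rule the_equality)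
      show "b0 < g \<and> g = osucc b0" using b0 by simp
      fix b assume b: "b < g \<and> g = osucc b"
      show "b = b0"
      proof (rule ccontr)
        assume "b \<noteq> b0"
        then have "b < b0 \<or> b0 < b" by auto
        then show False
          using b b0 osucc_le[of b b0] osucc_le[of b0 b] by auto
      qed
    qed
    show ?thesis
    proof (cases "g = ozero \<or> g = osucc ozero")
      case True then show ?thesis unfolding M_step_def by auto
    next
      case False
      then have h1: "g \<noteq> ozero" and h2: "g \<noteq> osucc ozero" by auto
      have "(b0, g) \<in> {(x, y). x < y}" using b0 by simp
      then show ?thesis unfolding M_step_suc[OF h1 h2 True] uniq by (simp add: cut_apply)
    qed
  next
    case False
    have "(\<Union>b\<in>{b. osucc ozero \<le> b \<and> b < g}. cut (Mag le A elts) {(x,y). x<y} g b)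
        = (\<Union>b\<in>{b. osucc ozero \<le> b \<and> b < g}. Mag le A elts b)"
      by (rule SUP_cong) (auto simp: cut_apply)
    then show ?thesis
    proof (cases "g = ozero \<or> g = osucc ozero")
      case True then show ?thesis unfolding M_step_def by auto
    next
      case F2: False
      then show ?thesis using False \<open>(\<Union>b\<in>_. _) = _\<close>
        by (simp only: M_step_lim de_Morgan_disj not_False_eq_True)
    qed
  qed
  finally show ?thesis .
qed

lemma Mag_basic: "z \<in> Mag le A elts (g::'o::wellorder) \<Longrightarrow> z \<notin> A \<and> elts z \<noteq> {}"
proof (induction g arbitrary: z rule: less_induct)
  case (less g)
  show ?case using less.prems less.IH
    unfolding Mag_unfold[of le A elts g] M_step_def
    by (auto simp: objs_def LO_pre_def LO_sub_def split: if_splits)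
qed

lemma Mag_down: "z \<in> Mag le A elts (g::'o::wellorder) \<Longrightarrow>
   \<exists>b<g. z \<in> Mag le A elts (osucc b) \<and> Mag le A elts (osucc b) \<subseteq> Mag le A elts g"
proof (induction g arbitrary: z rule: less_induct)
  case (less g)
  show ?case
  proof (cases "g = ozero")
    case True
    then show ?thesis using less.prems unfolding Mag_unfold[of le A elts g] M_step_def by simp
  next
    case nz: False
    show ?thesis
    proof (cases "g = osucc ozero")
      case True
      have "ozero < g" using nz ozero_le[of g] by auto
      then show ?thesis using True less.prems by auto
    next
      case n1: False
      show ?thesis
      proof (cases "\<exists>b<g. g = osucc b")
        case True
        then show ?thesis using less.prems by auto
      next
        case False
        then have "z \<in> (\<Union>b\<in>{b. osucc ozero \<le> b \<and> b < g}. Mag le A elts b)"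
          using less.prems nz n1 False unfolding Mag_unfold[of le A elts g] by (simp only: M_step_lim)
        then obtain b'' where b'': "osucc ozero \<le> b''" "b'' < g" "z \<in> Mag le A elts b''" by blast
        have sub: "Mag le A elts b'' \<subseteq> Mag le A elts g"
          using nz n1 False b'' unfolding Mag_unfold[of le A elts g] M_step_lim[OF nz n1 False] by auto
        from less.IH[OF b''(2) b''(3)] obtain b where
          "b < b''" "z \<in> Mag le A elts (osucc b)" "Mag le A elts (osucc b) \<subseteq> Mag le A elts b''"
          by blast
        then show ?thesis using sub b'' by (meson order.strict_trans subset_trans)
      qed
    qed
  qed
qed

lemma Mag_one: "ozero < (c::'o::wellorder) \<Longrightarrow>
    Mag le A elts (osucc (ozero::'o)) = objs A elts (LO_pre le A)"
proof -
  assume c: "ozero < c"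
  have "osucc (ozero::'o) \<noteq> ozero" using osucc_gt[OF c] by auto
  then show ?thesis unfolding Mag_unfold[of le A elts "osucc ozero"] M_step_def by simp
qed

lemma Mag_succ:
  assumes "(b::'o::wellorder) < c" "b \<noteq> ozero"
  shows "Mag le A elts (osucc b) = objs A elts (LO_sub elts (Mag le A elts b))"
proof -
  have gt: "b < osucc b" using osucc_gt[OF assms(1)] .
  have "ozero < b" using assms(2) ozero_le[of b] by auto
  then have n0: "osucc b \<noteq> ozero" using gt ozero_le[of "osucc b"] by auto
  have n1: "osucc b \<noteq> osucc ozero"
  proof
    assume "osucc b = osucc ozero"
    then have "osucc ozero \<le> b" using osucc_le[OF \<open>ozero < b\<close>] by simp
    then show False using \<open>osucc b = osucc ozero\<close> gt by auto
  qed
  have ex: "\<exists>b'<osucc b. osucc b = osucc b'" using gt by blast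
  have the: "(THE b'. b' < osucc b \<and> osucc b = osucc b') = b"
  proof (rule the_equality)
    show "b < osucc b \<and> osucc b = osucc b" using gt by simp
    fix b' assume h: "b' < osucc b \<and> osucc b = osucc b'"
    show "b' = b"
    proof (rule ccontr)
      assume "b' \<noteq> b"
      then have "b' < b \<or> b < b'" by auto
      then show False using h gt osucc_le[of b' b] osucc_le[of b b'] by auto
    qed
  qed
  show ?thesis unfolding Mag_unfold[of le A elts "osucc b"] M_step_def using n0 n1 ex the by simp
qed

lemma Mag_limit: "is_limit (g::'o::wellorder) \<Longrightarrow>
   Mag le A elts g = (\<Union>b\<in>{b. osucc ozero \<le> b \<and> b < g}. Mag le A elts b)"
proof -
  assume l: "is_limit g"
  have nz: "g \<noteq> ozero" and cl: "\<forall>b<g. osucc b < g" using l unfolding is_limit_def by auto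
  have "ozero < g" using nz ozero_le[of g] by auto
  then have n1: "g \<noteq> osucc ozero" using cl by auto
  have ns: "\<not> (\<exists>b<g. g = osucc b)" using cl by auto
  show ?thesis unfolding Mag_unfold[of le A elts g] M_step_lim[OF nz n1 ns] ..
qed

lemma Mag_sym:
  assumes lim: "is_limit (\<alpha>::'o::wellorder)"
  shows "\<forall>b c u v. max b c \<le> m \<longrightarrow> b < \<alpha> \<longrightarrow> c < \<alpha> \<longrightarrow>
     u \<in> Mag le A elts (osucc b) \<longrightarrow> v \<in> Mag le A elts (osucc c) \<longrightarrow> elts v \<subseteq> elts u \<longrightarrow>
     v \<in> Mag le A elts (osucc b)"
proof (induction m rule: less_induct)
  case (less m)
  have cl: "\<forall>b<\<alpha>. osucc b < \<alpha>" and nz: "\<alpha> \<noteq> ozero" using lim unfolding is_limit_def by auto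
  have z\<alpha>: "ozero < \<alpha>" using nz ozero_le[of \<alpha>] by auto
  show ?case
  proof (intro allI impI)
    fix b c u v
    assume m: "max b c \<le> m" and b\<alpha>: "b < \<alpha>" and c\<alpha>: "c < \<alpha>"
      and u: "u \<in> Mag le A elts (osucc b)" and v: "v \<in> Mag le A elts (osucc c)"
      and uv: "elts v \<subseteq> elts u"
    have vb: "v \<notin> A" "elts v \<noteq> {}" using Mag_basic[OF v] by auto
    show "v \<in> Mag le A elts (osucc b)"
    proof (cases "b = ozero")
      case b0: True
      have uA: "elts u \<subseteq> A" using u b0 Mag_one[OF z\<alpha>, of le A elts] by (auto simp: objs_def LO_pre_def)
      show ?thesis
      proof (cases "c = ozero")
        case True then show ?thesis using v b0 by simp
      next
        case False
        have "elts v \<subseteq> Mag le A elts c" using v Mag_succ[OF c\<alpha> False, of le A elts]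
          by (auto simp: objs_def LO_sub_def)
        then obtain p where "p \<in> elts v" "p \<in> Mag le A elts c" using vb by blast
        then show ?thesis using Mag_basic[of p le A elts c] uA uv by auto
      qed
    next
      case bn: False
      have uM: "elts u \<subseteq> Mag le A elts b" using u Mag_succ[OF b\<alpha> bn, of le A elts]
        by (auto simp: objs_def LO_sub_def)
      show ?thesis
      proof (cases "c = ozero")
        case True
        have "elts v \<subseteq> A" using v True Mag_one[OF z\<alpha>, of le A elts] by (auto simp: objs_def LO_pre_def)
        then obtain p where "p \<in> elts v" "p \<in> A" using vb by blast
        then show ?thesis using Mag_basic[of p le A elts b] uM uv by auto
      next
        case cn: False
        have vLO: "elts v \<in> LO_sub elts (Mag le A elts c)" using v Mag_succ[OF c\<alpha> cn, of le A elts]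
          by (auto simp: objs_def)
        have "elts v \<in> LO_sub elts (Mag le A elts b)"
          unfolding LO_sub_def
        proof (intro CollectI conjI ballI impI)
          show "elts v \<noteq> {}" by (rule vb(2))
          show "elts v \<subseteq> Mag le A elts b" using uv uM by auto
          fix p q assume p: "p \<in> elts v" and q: "q \<in> Mag le A elts b" and pq: "elts q \<subseteq> elts p"
          obtain b' where b': "b' < b" "q \<in> Mag le A elts (osucc b')"
            using Mag_down[OF q] by blast
          have pc: "p \<in> Mag le A elts c" using vLO p by (auto simp: LO_sub_def)
          obtain c' where c': "c' < c" "p \<in> Mag le A elts (osucc c')"
              "Mag le A elts (osucc c') \<subseteq> Mag le A elts c"
            using Mag_down[OF pc] by blast
          have "max c' b' < m" using m b'(1) c'(1) by (simp add: max_less_iff_conj order.strict_trans2)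
          moreover have "c' < \<alpha>" "b' < \<alpha>" using b'(1) c'(1) b\<alpha> c\<alpha> by auto
          ultimately have "q \<in> Mag le A elts (osucc c')"
            using less.IH[of "max c' b'"] c'(2) b'(2) pq by blast
          then have "q \<in> Mag le A elts c" using c'(3) by blast
          then show "q \<in> elts v" using vLO p pq by (auto simp: LO_sub_def)
        qed
        then show ?thesis using Mag_succ[OF b\<alpha> bn, of le A elts] vb by (auto simp: objs_def)
      qed
    qed
  qed
qed

theorem proposition4p9:
  fixes A :: "'v set" and elts :: "'v \<Rightarrow> 'v set" and le :: "'v \<Rightarrow> 'v \<Rightarrow> bool"
    and \<alpha> :: "'o::wellorder" and x :: 'v
  assumes atoms_empty: "\<forall>a\<in>A. elts a = {}"
    and extensional: "\<forall>u w. u \<notin> A \<longrightarrow> w \<notin> A \<longrightarrow> elts u = elts w \<longrightarrow> u = w"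
    and sep_A: "\<forall>S. S \<subseteq> A \<longrightarrow> (\<exists>u. u \<notin> A \<and> elts u = S)"
    and sep_M: "\<forall>g\<le>\<alpha>. \<forall>S. S \<subseteq> Mag le A elts g \<longrightarrow> (\<exists>u. u \<notin> A \<and> elts u = S)"
    and A_inf: "infinite A"
    and le_refl: "\<forall>a\<in>A. le a a"
    and le_trans: "\<forall>a\<in>A. \<forall>b\<in>A. \<forall>c\<in>A. le a b \<longrightarrow> le b c \<longrightarrow> le a c"
    and no_min: "\<forall>a\<in>A. \<exists>b\<in>A. le b a \<and> \<not> le a b"
    and lim: "is_limit \<alpha>"
    and succ_exists: "\<exists>g. \<alpha> < g"
    and x_set: "x \<notin> A"
    and x_ne: "elts x \<noteq> {}"
    and x_sub: "elts x \<subseteq> Mag le A elts \<alpha>"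
  shows "x \<in> Mag le A elts (osucc \<alpha>) \<longleftrightarrow>
     (let I = {b. b < \<alpha> \<and> elts x \<inter> Mag le A elts (osucc b) \<noteq> {}}
      in I \<noteq> {}
       \<and> elts x = (\<Union>b\<in>I. elts x \<inter> Mag le A elts (osucc b))
       \<and> (\<forall>b\<in>I. \<exists>y. y \<notin> A \<and> elts y = elts x \<inter> Mag le A elts (osucc b)
                     \<and> y \<in> Mag le A elts (osucc (osucc b))))"
  proof -
  let ?M = "Mag le A elts"
  let ?I = "{b. b < \<alpha> \<and> elts x \<inter> ?M (osucc b) \<noteq> {}}"
  have cl: "\<forall>b<\<alpha>. osucc b < \<alpha>" and nz: "\<alpha> \<noteq> ozero" using lim unfolding is_limit_def by auto
  have z\<alpha>: "ozero < \<alpha>" using nz ozero_le[of \<alpha>] by auto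
  obtain g where g: "\<alpha> < g" using succ_exists by blast
  have Msucc\<alpha>: "?M (osucc \<alpha>) = objs A elts (LO_sub elts (?M \<alpha>))"
    using Mag_succ[OF g nz] .
  have Sb_sub: "?M (osucc b) \<subseteq> ?M \<alpha>" if "b < \<alpha>" for b
  proof -
    have "osucc ozero \<le> osucc b" using osucc_mono[OF ozero_le that] .
    then show ?thesis using Mag_limit[OF lim, of le A elts] cl that by auto
  qed
  have down\<alpha>: "\<exists>b<\<alpha>. z \<in> ?M (osucc b)" if "z \<in> ?M \<alpha>" for z
    using Mag_down[OF that] by blast
  have S2: "?M (osucc (osucc b)) = objs A elts (LO_sub elts (?M (osucc b)))" if "b < \<alpha>" for b
  proof -
    have "b < osucc b" using osucc_gt[OF that] .
    then have "osucc b \<noteq> ozero" using ozero_le[of b] by auto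
    then show ?thesis by (rule Mag_succ[OF cl[rule_format, OF that]])
  qed
  show ?thesis
  proof
    assume xM: "x \<in> ?M (osucc \<alpha>)"
    have LO: "elts x \<in> LO_sub elts (?M \<alpha>)" using xM Msucc\<alpha> by (auto simp: objs_def)
    have U: "elts x = (\<Union>b\<in>?I. elts x \<inter> ?M (osucc b))"
    proof
      show "elts x \<subseteq> (\<Union>b\<in>?I. elts x \<inter> ?M (osucc b))"
      proof
        fix w assume w: "w \<in> elts x"
        then obtain b where "b < \<alpha>" "w \<in> ?M (osucc b)" using down\<alpha> x_sub by blast
        then show "w \<in> (\<Union>b\<in>?I. elts x \<inter> ?M (osucc b))" using w by blast
      qed
    qed auto
    have In: "?I \<noteq> {}" using U x_ne by auto
    have T: "\<forall>b\<in>?I. \<exists>y. y \<notin> A \<and> elts y = elts x \<inter> ?M (osucc b) \<and> y \<in> ?M (osucc (osucc b))"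
    proof
      fix b assume b: "b \<in> ?I"
      then have b\<alpha>: "b < \<alpha>" by simp
      have "osucc b \<le> \<alpha>" using cl b\<alpha> by (simp add: less_imp_le)
      then obtain y where y: "y \<notin> A" "elts y = elts x \<inter> ?M (osucc b)"
        using sep_M by (meson inf_le2)
      have "elts y \<in> LO_sub elts (?M (osucc b))"
        unfolding LO_sub_def
      proof (intro CollectI conjI ballI impI)
        show "elts y \<noteq> {}" using b y by simp
        show "elts y \<subseteq> ?M (osucc b)" using y by simp
        fix p q assume p: "p \<in> elts y" and q: "q \<in> ?M (osucc b)" and pq: "elts q \<subseteq> elts p"
        have "q \<in> ?M \<alpha>" using Sb_sub[OF b\<alpha>] q by blast
        then have "q \<in> elts x" using LO p y pq by (auto simp: LO_sub_def)
        then show "q \<in> elts y" using y q by simp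
      qed
      then show "\<exists>y. y \<notin> A \<and> elts y = elts x \<inter> ?M (osucc b) \<and> y \<in> ?M (osucc (osucc b))"
        using y S2[OF b\<alpha>] by (auto simp: objs_def)
    qed
    show "let I = ?I in I \<noteq> {} \<and> elts x = (\<Union>b\<in>I. elts x \<inter> ?M (osucc b))
       \<and> (\<forall>b\<in>I. \<exists>y. y \<notin> A \<and> elts y = elts x \<inter> ?M (osucc b) \<and> y \<in> ?M (osucc (osucc b)))"
      using In U T by (simp add: Let_def)
  next
    assume R: "let I = ?I in I \<noteq> {} \<and> elts x = (\<Union>b\<in>I. elts x \<inter> ?M (osucc b))
       \<and> (\<forall>b\<in>I. \<exists>y. y \<notin> A \<and> elts y = elts x \<inter> ?M (osucc b) \<and> y \<in> ?M (osucc (osucc b)))"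
    then have U: "elts x = (\<Union>b\<in>?I. elts x \<inter> ?M (osucc b))"
      and T: "\<forall>b\<in>?I. \<exists>y. y \<notin> A \<and> elts y = elts x \<inter> ?M (osucc b) \<and> y \<in> ?M (osucc (osucc b))"
      by (simp_all add: Let_def)
    have "elts x \<in> LO_sub elts (?M \<alpha>)"
      unfolding LO_sub_def
    proof (intro CollectI conjI ballI impI)
      show "elts x \<noteq> {}" by (rule x_ne)
      show "elts x \<subseteq> ?M \<alpha>" by (rule x_sub)
      fix w z assume w: "w \<in> elts x" and z: "z \<in> ?M \<alpha>" and zw: "elts z \<subseteq> elts w"
      obtain b where b: "b \<in> ?I" "w \<in> ?M (osucc b)" using w U by blast
      obtain c where c: "c < \<alpha>" "z \<in> ?M (osucc c)" using down\<alpha>[OF z] by blast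
      have b\<alpha>: "b < \<alpha>" using b by simp
      have zb: "z \<in> ?M (osucc b)"
        using Mag_sym[OF lim, of "max b c" le A elts] b\<alpha> c b(2) zw by blast
      obtain y where y: "elts y = elts x \<inter> ?M (osucc b)" "y \<in> ?M (osucc (osucc b))"
        using T b(1) by blast
      have "elts y \<in> LO_sub elts (?M (osucc b))" using y(2) S2[OF b\<alpha>] by (auto simp: objs_def)
      moreover have "w \<in> elts y" using y(1) w b(2) by simp
      ultimately have "z \<in> elts y" using zb zw by (auto simp: LO_sub_def)
      then show "z \<in> elts x" using y(1) by simp
    qed
    then show "x \<in> ?M (osucc \<alpha>)" using Msucc\<alpha> x_set by (simp add: objs_def)
  qed
qed

end
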